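(* Let $V$ be a quasi-regular mixed lattice vector space, let $A$ be a quasi-ideal and $B$ a positively generated $(\le)$-order convex subspace of $V$. Then $A+B$ is a mixed-order convex subspace. Moreover, if $B$ is an ideal then $A+B$ is a quasi-ideal, and if in addition $A$ is regular then $(A+B)_p=A_p+B_p$.
   Context: A mixed lattice vector space is a real vector space $V$ with two partial orderings $\le$ (initial) and $\preceq$ (specific), each compatible with the vector space structure, such that for all $x,y$ the mixed lower envelope $x\curlywedge y=\max\{w: w\preceq x,\ w\le y\}$ and mixed upper envelope $x\curlyvee y=\min\{w: x\preceq w,\ y\le w\}$ exist (max/min with respect to $\le$). $V_p=\{x:0\le x\}$, $V_{sp}=\{x:0\preceq x\}$, $E_p=E\cap V_p$, $E_{sp}=E\cap V_{sp}$. $V$ is quasi-regular if $V_{sp}$ is closed under $\curlywedge,\curlyvee$. A mixed lattice subspace is a linear subspace closed under $\curlywedge,\curlyvee$. A subspace $S$ is regular if $S=S_{sp}-S_{sp}$ and positively generated if $S=S_p-S_p$. A subset $U$ is $(\le)$-order convex if $x\le z\le y$ with $x,y\in U$ implies $z\in U$. A subspace $A$ is mixed-order convex if $y\in A$ and $0\preceq x\le y$ imply $x\in A$. An ideal is a $(\le)$-order convex mixed lattice subspace; a quasi-ideal is a mixed-order convex mixed lattice subspace. *)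

theory Defs
  imports Complex_Main
begin

text \<open>A mixed lattice vector space: a real vector space with two partial orders,
  the initial order le (written \<le> in the paper) and the specific order sle
  (written \<preceq> in the paper), both compatible with the vector space
  structure, such that the mixed lower and upper envelopes exist.\<close>

definition partial_order_rel :: "('a \<Rightarrow> 'a \<Rightarrow> bool) \<Rightarrow> bool" where
  "partial_order_rel r \<longleftrightarrow>
     (\<forall>x. r x x) \<and> (\<forall>x y z. r x y \<longrightarrow> r y z \<longrightarrow> r x z) \<and>
     (\<forall>x y. r x y \<longrightarrow> r y x \<longrightarrow> x = y)"

definition vs_compatible :: "('a::real_vector \<Rightarrow> 'a \<Rightarrow> bool) \<Rightarrow> bool" where
  "vs_compatible r \<longleftrightarrow>
     (\<forall>x y z. r x y \<longrightarrow> r (x + z) (y + z)) \<and>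
     (\<forall>x y (c::real). r x y \<longrightarrow> 0 \<le> c \<longrightarrow> r (c *\<^sub>R x) (c *\<^sub>R y))"

definition is_greatest_wrt :: "('a \<Rightarrow> 'a \<Rightarrow> bool) \<Rightarrow> 'a set \<Rightarrow> 'a \<Rightarrow> bool" where
  "is_greatest_wrt r S m \<longleftrightarrow> m \<in> S \<and> (\<forall>w\<in>S. r w m)"

definition is_least_wrt :: "('a \<Rightarrow> 'a \<Rightarrow> bool) \<Rightarrow> 'a set \<Rightarrow> 'a \<Rightarrow> bool" where
  "is_least_wrt r S m \<longleftrightarrow> m \<in> S \<and> (\<forall>w\<in>S. r m w)"

text \<open>mixed lower envelope  x \<curlywedge> y = max wrt le {w. w \<preceq> x, w \<le> y}\<close>
definition mlow :: "('a \<Rightarrow> 'a \<Rightarrow> bool) \<Rightarrow> ('a \<Rightarrow> 'a \<Rightarrow> bool) \<Rightarrow> 'a \<Rightarrow> 'a \<Rightarrow> 'a" where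
  "mlow le sle x y = (THE m. is_greatest_wrt le {w. sle w x \<and> le w y} m)"

text \<open>mixed upper envelope  x \<curlyvee> y = min wrt le {w. x \<preceq> w, y \<le> w}\<close>
definition mup :: "('a \<Rightarrow> 'a \<Rightarrow> bool) \<Rightarrow> ('a \<Rightarrow> 'a \<Rightarrow> bool) \<Rightarrow> 'a \<Rightarrow> 'a \<Rightarrow> 'a" where
  "mup le sle x y = (THE m. is_least_wrt le {w. sle x w \<and> le y w} m)"

definition mixed_lattice_vs :: "('a::real_vector \<Rightarrow> 'a \<Rightarrow> bool) \<Rightarrow> ('a \<Rightarrow> 'a \<Rightarrow> bool) \<Rightarrow> bool" where
  "mixed_lattice_vs le sle \<longleftrightarrow>
     partial_order_rel le \<and> partial_order_rel sle \<and>
     vs_compatible le \<and> vs_compatible sle \<and>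
     (\<forall>x y. \<exists>m. is_greatest_wrt le {w. sle w x \<and> le w y} m) \<and>
     (\<forall>x y. \<exists>m. is_least_wrt le {w. sle x w \<and> le y w} m)"

definition quasi_regular :: "('a::real_vector \<Rightarrow> 'a \<Rightarrow> bool) \<Rightarrow> ('a \<Rightarrow> 'a \<Rightarrow> bool) \<Rightarrow> bool" where
  "quasi_regular le sle \<longleftrightarrow>
     (\<forall>x y. sle 0 x \<longrightarrow> sle 0 y \<longrightarrow> sle 0 (mlow le sle x y) \<and> sle 0 (mup le sle x y))"

definition mixed_lattice_subspace ::
  "('a::real_vector \<Rightarrow> 'a \<Rightarrow> bool) \<Rightarrow> ('a \<Rightarrow> 'a \<Rightarrow> bool) \<Rightarrow> 'a set \<Rightarrow> bool" where
  "mixed_lattice_subspace le sle S \<longleftrightarrow> subspace S \<and>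
     (\<forall>x\<in>S. \<forall>y\<in>S. mlow le sle x y \<in> S \<and> mup le sle x y \<in> S)"

definition pos_part :: "('a::real_vector \<Rightarrow> 'a \<Rightarrow> bool) \<Rightarrow> 'a set \<Rightarrow> 'a set" where
  "pos_part r S = {x \<in> S. r 0 x}"

definition regular_subspace :: "('a::real_vector \<Rightarrow> 'a \<Rightarrow> bool) \<Rightarrow> 'a set \<Rightarrow> bool" where
  "regular_subspace sle S \<longleftrightarrow>
     S = {a - b | a b. a \<in> pos_part sle S \<and> b \<in> pos_part sle S}"

definition positively_generated :: "('a::real_vector \<Rightarrow> 'a \<Rightarrow> bool) \<Rightarrow> 'a set \<Rightarrow> bool" where
  "positively_generated le S \<longleftrightarrow>
     S = {a - b | a b. a \<in> pos_part le S \<and> b \<in> pos_part le S}"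

definition order_convex :: "('a \<Rightarrow> 'a \<Rightarrow> bool) \<Rightarrow> 'a set \<Rightarrow> bool" where
  "order_convex le U \<longleftrightarrow> (\<forall>x\<in>U. \<forall>y\<in>U. \<forall>z. le x z \<longrightarrow> le z y \<longrightarrow> z \<in> U)"

definition mixed_order_convex ::
  "('a::real_vector \<Rightarrow> 'a \<Rightarrow> bool) \<Rightarrow> ('a \<Rightarrow> 'a \<Rightarrow> bool) \<Rightarrow> 'a set \<Rightarrow> bool" where
  "mixed_order_convex le sle A \<longleftrightarrow> (\<forall>x y. y \<in> A \<longrightarrow> sle 0 x \<longrightarrow> le x y \<longrightarrow> x \<in> A)"

definition ml_ideal :: "('a::real_vector \<Rightarrow> 'a \<Rightarrow> bool) \<Rightarrow> ('a \<Rightarrow> 'a \<Rightarrow> bool) \<Rightarrow> 'a set \<Rightarrow> bool" where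
  "ml_ideal le sle S \<longleftrightarrow> order_convex le S \<and> mixed_lattice_subspace le sle S"

definition quasi_ideal :: "('a::real_vector \<Rightarrow> 'a \<Rightarrow> bool) \<Rightarrow> ('a \<Rightarrow> 'a \<Rightarrow> bool) \<Rightarrow> 'a set \<Rightarrow> bool" where
  "quasi_ideal le sle S \<longleftrightarrow> mixed_order_convex le sle S \<and> mixed_lattice_subspace le sle S"

definition set_sum :: "'a::plus set \<Rightarrow> 'a set \<Rightarrow> 'a set" where
  "set_sum A B = {a + b | a b. a \<in> A \<and> b \<in> B}"

end

theory Submission
  imports Defs
begin

lemma po_refl: "partial_order_rel r \<Longrightarrow> r x x"
  by (simp add: partial_order_rel_def)
lemma po_trans: "partial_order_rel r \<Longrightarrow> r x y \<Longrightarrow> r y z \<Longrightarrow> r x z"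
  unfolding partial_order_rel_def by blast
lemma po_antisym: "partial_order_rel r \<Longrightarrow> r x y \<Longrightarrow> r y x \<Longrightarrow> x = y"
  unfolding partial_order_rel_def by blast

lemma cone_iff:
  assumes "vs_compatible r" shows "r x y \<longleftrightarrow> r 0 (y - x)"
proof
  assume "r x y"
  then have "r (x + - x) (y + - x)" using assms unfolding vs_compatible_def by blast
  then show "r 0 (y - x)" by simp
next
  assume "r 0 (y - x)"
  then have "r (0 + x) (y - x + x)" using assms unfolding vs_compatible_def by blast
  then show "r x y" by simp
qed

lemma cone_add:
  assumes "vs_compatible r" "partial_order_rel r" "r 0 a" "r 0 b"
  shows "r 0 (a + b)"
proof -
  have "r (0 + b) (a + b)" using assms unfolding vs_compatible_def by blast
  then show ?thesis using assms po_trans by fastforce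
qed

lemma mup_prop:
  assumes V: "mixed_lattice_vs le sle"
  shows "sle x (mup le sle x y) \<and> le y (mup le sle x y) \<and>
         (\<forall>w. sle x w \<longrightarrow> le y w \<longrightarrow> le (mup le sle x y) w)"
proof -
  have po: "partial_order_rel le" using V unfolding mixed_lattice_vs_def by blast
  obtain m where m: "is_least_wrt le {w. sle x w \<and> le y w} m"
    using V unfolding mixed_lattice_vs_def by blast
  have "\<exists>!m. is_least_wrt le {w. sle x w \<and> le y w} m"
    using m po_antisym[OF po] unfolding is_least_wrt_def by blast
  then have "is_least_wrt le {w. sle x w \<and> le y w} (mup le sle x y)"
    unfolding mup_def by (rule theI')
  then show ?thesis unfolding is_least_wrt_def by blast
qed

lemma mlow_prop:
  assumes V: "mixed_lattice_vs le sle"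
  shows "sle (mlow le sle x y) x \<and> le (mlow le sle x y) y \<and>
         (\<forall>w. sle w x \<longrightarrow> le w y \<longrightarrow> le w (mlow le sle x y))"
proof -
  have po: "partial_order_rel le" using V unfolding mixed_lattice_vs_def by blast
  obtain m where m: "is_greatest_wrt le {w. sle w x \<and> le w y} m"
    using V unfolding mixed_lattice_vs_def by blast
  have "\<exists>!m. is_greatest_wrt le {w. sle w x \<and> le w y} m"
    using m po_antisym[OF po] unfolding is_greatest_wrt_def by blast
  then have "is_greatest_wrt le {w. sle w x \<and> le w y} (mlow le sle x y)"
    unfolding mlow_def by (rule theI')
  then show ?thesis unfolding is_greatest_wrt_def by blast
qed

lemma set_sum_subspace:
  assumes "subspace A" "subspace B" shows "subspace (set_sum A B)"
  unfolding real_vector.subspace_def set_sum_def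
proof (intro conjI ballI allI)
  show "0 \<in> {a + b |a b. a \<in> A \<and> b \<in> B}"
    using assms real_vector.subspace_0 by force
next
  fix x y assume "x \<in> {a + b |a b. a \<in> A \<and> b \<in> B}" "y \<in> {a + b |a b. a \<in> A \<and> b \<in> B}"
  then obtain a1 b1 a2 b2 where "x = a1 + b1" "y = a2 + b2" "a1 \<in> A" "a2 \<in> A" "b1 \<in> B" "b2 \<in> B"
    by blast
  moreover have "a1 + a2 \<in> A" "b1 + b2 \<in> B"
    using assms real_vector.subspace_add calculation by blast+
  moreover have "x + y = (a1 + a2) + (b1 + b2)" using calculation by (simp add: algebra_simps)
  ultimately show "x + y \<in> {a + b |a b. a \<in> A \<and> b \<in> B}" by blast
next
  fix c :: real and x assume "x \<in> {a + b |a b. a \<in> A \<and> b \<in> B}"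
  then obtain a1 b1 where h: "x = a1 + b1" "a1 \<in> A" "b1 \<in> B" by blast
  then show "c *\<^sub>R x \<in> {a + b |a b. a \<in> A \<and> b \<in> B}"
  proof -
    have "c *\<^sub>R a1 \<in> A" "c *\<^sub>R b1 \<in> B" using assms real_vector.subspace_scale h by blast+
    moreover have "c *\<^sub>R x = c *\<^sub>R a1 + c *\<^sub>R b1" using h by (simp add: scaleR_add_right)
    ultimately show ?thesis by blast
  qed
qed

theorem theorem4p16:
  fixes le sle :: "'a::real_vector \<Rightarrow> 'a \<Rightarrow> bool"
    and A B :: "'a set"
  assumes V: "mixed_lattice_vs le sle"
    and qr: "quasi_regular le sle"
    and A: "quasi_ideal le sle A"
    and B_sub: "subspace B"
    and B_pg: "positively_generated le B"
    and B_conv: "order_convex le B"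
  shows "(subspace (set_sum A B) \<and> mixed_order_convex le sle (set_sum A B)) \<and>
         (ml_ideal le sle B \<longrightarrow> quasi_ideal le sle (set_sum A B)) \<and>
         (ml_ideal le sle B \<longrightarrow> regular_subspace sle A \<longrightarrow>
           pos_part le (set_sum A B) = set_sum (pos_part le A) (pos_part le B))"
proof -
  have poL: "partial_order_rel le" and poS: "partial_order_rel sle"
    and cL: "vs_compatible le" and cS: "vs_compatible sle"
    using V unfolding mixed_lattice_vs_def by blast+
  have A_sub: "subspace A" and A_mlow: "\<And>x y. x \<in> A \<Longrightarrow> y \<in> A \<Longrightarrow> mlow le sle x y \<in> A"
    and A_mup: "\<And>x y. x \<in> A \<Longrightarrow> y \<in> A \<Longrightarrow> mup le sle x y \<in> A"
    and A_conv: "\<And>x y. y \<in> A \<Longrightarrow> sle 0 x \<Longrightarrow> le x y \<Longrightarrow> x \<in> A"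
    using A unfolding quasi_ideal_def mixed_lattice_subspace_def mixed_order_convex_def by blast+
  have A0: "0 \<in> A" using A_sub real_vector.subspace_0 by blast
  have B0: "0 \<in> B" using B_sub real_vector.subspace_0 by blast
  have Boc: "\<And>u v z. u \<in> B \<Longrightarrow> v \<in> B \<Longrightarrow> le u z \<Longrightarrow> le z v \<Longrightarrow> z \<in> B"
    using B_conv unfolding order_convex_def by blast
  have S_sub: "subspace (set_sum A B)" using set_sum_subspace A_sub B_sub by blast
  note Lc = cone_iff[OF cL] and Sc = cone_iff[OF cS]
  note Ladd = cone_add[OF cL poL] and Sadd = cone_add[OF cS poS]
  note Ltr = po_trans[OF poL]
  have MC: "mixed_order_convex le sle (set_sum A B)"
    unfolding mixed_order_convex_def
  proof (intro allI impI)
    fix x y assume y: "y \<in> set_sum A B" and x0: "sle 0 x" and xy: "le x y"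
    then obtain a b where ab: "y = a + b" "a \<in> A" "b \<in> B" unfolding set_sum_def by blast
    then obtain b1 b2 where bb: "b = b1 - b2" "b1 \<in> B" "b2 \<in> B" "le 0 b1" "le 0 b2"
      using B_pg unfolding positively_generated_def pos_part_def by blast
    define a' where "a' = mup le sle 0 a"
    have a'A: "a' \<in> A" using A_mup A0 ab unfolding a'_def by blast
    have a'1: "sle 0 a'" and a'2: "le a a'" using mup_prop[OF V] unfolding a'_def by blast+
    define x1 where "x1 = mup le sle 0 (x - b1)"
    have x11: "sle 0 x1" and x12: "le (x - b1) x1"
      and x13: "\<And>w. sle 0 w \<Longrightarrow> le (x - b1) w \<Longrightarrow> le x1 w"
      using mup_prop[OF V] unfolding x1_def by blast+
    have "le (x - b1) a'"
    proof -
      have "le 0 (y - x)" using xy Lc[of x y] by simp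
      then have "le 0 ((y - x) + b2 + (a' - a))" using Ladd[OF Ladd[OF _ bb(5)] a'2[unfolded Lc[of a a']]] by blast
      moreover have "(y - x) + b2 + (a' - a) = a' - (x - b1)" using ab bb by (simp add: algebra_simps)
      ultimately show ?thesis using Lc[of "x - b1" a'] by simp
    qed
    then have "le x1 a'" using x13 a'1 by blast
    then have x1A: "x1 \<in> A" using A_conv a'A x11 by blast
    have "le (x - b1) x" using Lc[of "x - b1" x] bb by simp
    then have "le x1 x" using x13 x0 by blast
    then have "le 0 (x - x1)" using Lc[of x1 x] by simp
    moreover have "le (x - x1) b1" using x12 Lc[of "x - b1" x1] Lc[of "x - x1" b1] by (simp add: algebra_simps)
    ultimately have "x - x1 \<in> B" using Boc[OF B0 bb(2)] by blast
    moreover have "x = x1 + (x - x1)" by simp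
    ultimately show "x \<in> set_sum A B" using x1A unfolding set_sum_def by blast
  qed
  have part1: "subspace (set_sum A B) \<and> mixed_order_convex le sle (set_sum A B)"
    using S_sub MC by blast
  have conv_S: "\<And>x y. y \<in> set_sum A B \<Longrightarrow> sle 0 x \<Longrightarrow> le x y \<Longrightarrow> x \<in> set_sum A B"
    using MC unfolding mixed_order_convex_def by blast
  have part2: "ml_ideal le sle B \<longrightarrow> quasi_ideal le sle (set_sum A B)"
  proof
    assume BI: "ml_ideal le sle B"
    have B_mup: "\<And>x y. x \<in> B \<Longrightarrow> y \<in> B \<Longrightarrow> mup le sle x y \<in> B"
      using BI unfolding ml_ideal_def mixed_lattice_subspace_def by blast
    have bound: "\<exists>W. W \<in> set_sum A B \<and> sle 0 W \<and> le s W" if s: "s \<in> set_sum A B" for s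
    proof -
      obtain a c where ac: "s = a + c" "a \<in> A" "c \<in> B" using s unfolding set_sum_def by blast
      define W where "W = mup le sle 0 a + mup le sle 0 c"
      have "W \<in> set_sum A B" using A_mup B_mup A0 B0 ac unfolding W_def set_sum_def by blast
      moreover have "sle 0 W" using mup_prop[OF V] Sadd unfolding W_def by blast
      moreover have "le s W"
      proof -
        have "le 0 (mup le sle 0 a - a)" "le 0 (mup le sle 0 c - c)"
          using mup_prop[OF V, of 0 a] mup_prop[OF V, of 0 c] Lc[of a "mup le sle 0 a"] Lc[of c "mup le sle 0 c"] by simp_all
        then have "le 0 ((mup le sle 0 a - a) + (mup le sle 0 c - c))" using Ladd by blast
        then show ?thesis using Lc[of s W] ac unfolding W_def by (simp add: algebra_simps)
      qed
      ultimately show ?thesis by blast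
    qed
    have closed: "mlow le sle x y \<in> set_sum A B \<and> mup le sle x y \<in> set_sum A B"
      if xy: "x \<in> set_sum A B" "y \<in> set_sum A B" for x y
    proof
      have yx: "y - x \<in> set_sum A B" "x - y \<in> set_sum A B"
        using S_sub xy real_vector.subspace_diff by blast+
      obtain W where W: "W \<in> set_sum A B" "sle 0 W" "le (y - x) W" using bound yx by blast
      define m where "m = mup le sle x y"
      have m1: "sle x m" and m3: "\<And>w. sle x w \<Longrightarrow> le y w \<Longrightarrow> le m w"
        using mup_prop[OF V] unfolding m_def by blast+
      have "sle x (x + W)" using W Sc[of x "x + W"] by simp
      moreover have "le y (x + W)" using W Lc[of y "x + W"] Lc[of "y - x" W] by (simp add: algebra_simps)
      ultimately have "le m (x + W)" using m3 by blast
      then have "le (m - x) W" using Lc[of m "x + W"] Lc[of "m - x" W] by (simp add: algebra_simps)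
      moreover have "sle 0 (m - x)" using m1 Sc[of x m] by simp
      ultimately have "m - x \<in> set_sum A B" using conv_S W by blast
      then have "(m - x) + x \<in> set_sum A B" using S_sub xy real_vector.subspace_add by blast
      then show "mup le sle x y \<in> set_sum A B" unfolding m_def by simp
    next
      have yx: "x - y \<in> set_sum A B"
        using S_sub xy real_vector.subspace_diff by blast+
      obtain W where W: "W \<in> set_sum A B" "sle 0 W" "le (x - y) W" using bound yx by blast
      define l where "l = mlow le sle x y"
      have l1: "sle l x" and l3: "\<And>w. sle w x \<Longrightarrow> le w y \<Longrightarrow> le w l"
        using mlow_prop[OF V] unfolding l_def by blast+
      have "sle (x - W) x" using W Sc[of "x - W" x] by simp
      moreover have "le (x - W) y" using W Lc[of "x - W" y] Lc[of "x - y" W] by (simp add: algebra_simps)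
      ultimately have "le (x - W) l" using l3 by blast
      then have "le (x - l) W" using Lc[of "x - W" l] Lc[of "x - l" W] by (simp add: algebra_simps)
      moreover have "sle 0 (x - l)" using l1 Sc[of l x] by simp
      ultimately have "x - l \<in> set_sum A B" using conv_S W by blast
      then have "x - (x - l) \<in> set_sum A B" using S_sub xy real_vector.subspace_diff by blast
      then show "mlow le sle x y \<in> set_sum A B" unfolding l_def by simp
    qed
    show "quasi_ideal le sle (set_sum A B)"
      unfolding quasi_ideal_def mixed_lattice_subspace_def using MC S_sub closed by blast
  qed
  have part3: "ml_ideal le sle B \<longrightarrow> regular_subspace sle A \<longrightarrow>
           pos_part le (set_sum A B) = set_sum (pos_part le A) (pos_part le B)"
  proof (intro impI)
    assume BI: "ml_ideal le sle B" and AR: "regular_subspace sle A"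
    have B_mup: "\<And>x y. x \<in> B \<Longrightarrow> y \<in> B \<Longrightarrow> mup le sle x y \<in> B"
      using BI unfolding ml_ideal_def mixed_lattice_subspace_def by blast
    show "pos_part le (set_sum A B) = set_sum (pos_part le A) (pos_part le B)"
    proof
      show "set_sum (pos_part le A) (pos_part le B) \<subseteq> pos_part le (set_sum A B)"
        unfolding set_sum_def pos_part_def using Ladd by blast
    next
      show "pos_part le (set_sum A B) \<subseteq> set_sum (pos_part le A) (pos_part le B)"
      proof
        fix z assume "z \<in> pos_part le (set_sum A B)"
        then obtain a b where z: "z = a + b" "a \<in> A" "b \<in> B" "le 0 z"
          unfolding pos_part_def set_sum_def by blast
        then obtain a1 a2 where aa: "a = a1 - a2" "a1 \<in> A" "a2 \<in> A" "sle 0 a1" "sle 0 a2"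
          using AR unfolding regular_subspace_def pos_part_def by blast
        define b' where "b' = mup le sle b 0"
        have b'B: "b' \<in> B" using B_mup z B0 unfolding b'_def by blast
        have b'1: "sle b b'" and b'2: "le 0 b'" using mup_prop[OF V] unfolding b'_def by blast+
        define p where "p = mlow le sle a1 z"
        have p1: "sle p a1" and p2: "le p z"
          and p3: "\<And>w. sle w a1 \<Longrightarrow> le w z \<Longrightarrow> le w p"
          using mlow_prop[OF V] unfolding p_def by blast+
        have p0: "le 0 p" using p3[of 0] aa(4) z(4) by blast
        have "sle 0 (a1 - p)" using p1 Sc[of p a1] by simp
        moreover have "le (a1 - p) a1" using p0 Lc[of "a1 - p" a1] by simp
        ultimately have "a1 - p \<in> A" using A_conv[OF aa(2)] by blast
        then have "a1 - (a1 - p) \<in> A" using real_vector.subspace_diff[OF A_sub aa(2)] by blast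
        then have pA: "p \<in> A" by simp
        have "sle 0 (a2 + (b' - b))" using Sadd[OF aa(5) b'1[unfolded Sc[of b b']]] .
        moreover have "a2 + (b' - b) = a1 - (z - b')" using z aa by (simp add: algebra_simps)
        ultimately have "sle (z - b') a1" using Sc[of "z - b'" a1] by simp
        moreover have "le (z - b') z" using b'2 Lc[of "z - b'" z] by simp
        ultimately have "le (z - b') p" using p3 by blast
        then have "le (z - p) b'" using Lc[of "z - b'" p] Lc[of "z - p" b'] by (simp add: algebra_simps)
        moreover have "le 0 (z - p)" using p2 Lc[of p z] by simp
        ultimately have "z - p \<in> B" using Boc[OF B0 b'B] by blast
        moreover have "z = p + (z - p)" by simp
        ultimately show "z \<in> set_sum (pos_part le A) (pos_part le B)"
          using pA p0 \<open>le 0 (z - p)\<close> unfolding set_sum_def pos_part_def by blast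
      qed
    qed
  qed
  show ?thesis by (rule conjI[OF part1 conjI[OF part2 part3]])
qed

end
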